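(* Let $K$ be a positive integer and let $\gamma_0,\dots,\gamma_K$ be real numbers with $\gamma_0=1$ and $\gamma_K\neq 0$. For $n\ge K$ put $$q_n(x)=\sum_{j=0}^K\gamma_jH_{n-j}(x),$$ and let $P(x)=\sum_{j=0}^K\gamma_jx^{K-j}$. (i) If $P$ has only real zeros, then for every $n\ge K$ all the zeros of $q_n$ are real and simple, and the zeros of $q_{n+1}$ interlace the zeros of $q_n$. (ii) If $P$ has non-real zeros, then there exists a positive integer $n_0$, depending only on the non-real zeros of $P$ and on $K$, such that for every $n\ge n_0$ all the zeros of $q_n$ are real and simple and the zeros of $q_{n+1}$ interlace the zeros of $q_n$.
   Context: $H_n$ denotes the standard (physicists') Hermite polynomial of degree $n$, orthogonal with respect to $e^{-x^2}$ on $\mathbb{R}$, with leading coefficient $2^n$; they satisfy $H_{n+1}(x)=2xH_n(x)-H_n'(x)$. Interlacing: given two finite sets $U,V$ of real numbers, $U$ (strictly) interlaces $V$ if $\min U<\min V$ and between any two consecutive elements of either of the two sets there is an element of the other. "The zeros of $p$ interlace the zeros of $q$" means that the set of zeros of $p$ interlaces the set of zeros of $q$ in this sense. *)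

theory Defs
  imports "HOL-Computational_Algebra.Polynomial" Complex_Main
begin

text \<open>Physicists' Hermite polynomials: H_0 = 1, H_(n+1) = 2x H_n - H_n'.\<close>
fun hermite :: "nat \<Rightarrow> real poly" where
  "hermite 0 = 1"
| "hermite (Suc n) = [:0, 2:] * hermite n - pderiv (hermite n)"

definition consecutive :: "real set \<Rightarrow> real \<Rightarrow> real \<Rightarrow> bool" where
  "consecutive U a b \<longleftrightarrow> a \<in> U \<and> b \<in> U \<and> a < b \<and> \<not> (\<exists>u\<in>U. a < u \<and> u < b)"

definition interlaces :: "real set \<Rightarrow> real set \<Rightarrow> bool" where
  "interlaces U V \<longleftrightarrow> finite U \<and> finite V \<and> U \<noteq> {} \<and> V \<noteq> {} \<and> Min U < Min V
     \<and> (\<forall>a b. consecutive U a b \<longrightarrow> (\<exists>v\<in>V. a < v \<and> v < b))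
     \<and> (\<forall>a b. consecutive V a b \<longrightarrow> (\<exists>u\<in>U. a < u \<and> u < b))"

definition real_zeros :: "real poly \<Rightarrow> real set" where
  "real_zeros p = {x. poly p x = 0}"

definition real_simple_zeros :: "real poly \<Rightarrow> bool" where
  "real_simple_zeros p \<longleftrightarrow> p \<noteq> 0 \<and>
     (\<forall>z::complex. poly (map_poly complex_of_real p) z = 0 \<longrightarrow>
        z \<in> \<real> \<and> order z (map_poly complex_of_real p) = 1)"

definition qpoly :: "nat \<Rightarrow> (nat \<Rightarrow> real) \<Rightarrow> nat \<Rightarrow> real poly" where
  "qpoly K \<gamma> n = (\<Sum>j\<le>K. smult (\<gamma> j) (hermite (n - j)))"

definition Ppoly :: "nat \<Rightarrow> (nat \<Rightarrow> real) \<Rightarrow> real poly" where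
  "Ppoly K \<gamma> = (\<Sum>j\<le>K. monom (\<gamma> j) (K - j))"

definition nonreal_zeros :: "real poly \<Rightarrow> complex set" where
  "nonreal_zeros p = {z. poly (map_poly complex_of_real p) z = 0 \<and> z \<notin> \<real>}"

end

theory Submission
  imports Defs "HOL-Computational_Algebra.Fundamental_Theorem_Algebra" "HOL-Library.FuncSet"
begin

definition Sa :: "real \<Rightarrow> real poly \<Rightarrow> real poly" where
  "Sa a f = [:-a, 2:] * f - pderiv f"

lemma hermite_Suc': "hermite (Suc n) = Sa 0 (hermite n)"
  by (simp add: Sa_def)

declare hermite.simps(2)[simp del]

lemma pderiv_hermite: "pderiv (hermite (Suc n)) = smult (2 * real (Suc n)) (hermite n)"
proof (induction n)
  case 0
  then show ?case by (simp add: pderiv_pCons hermite.simps)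
next
  case (Suc n)
  have "pderiv (hermite (Suc (Suc n))) = pderiv ([:0, 2:] * hermite (Suc n)) - pderiv (pderiv (hermite (Suc n)))"
    by (simp add: pderiv_diff hermite.simps(2)[of "Suc n"])
  also have "\<dots> = [:0,2:] * pderiv (hermite (Suc n)) + smult 2 (hermite (Suc n)) - pderiv (pderiv (hermite (Suc n)))"
    by (simp add: pderiv_mult pderiv_pCons pderiv_smult)
  also have "\<dots> = [:0,2:] * smult (2 * real (Suc n)) (hermite n) + smult 2 (hermite (Suc n)) - smult (2 * real (Suc n)) (pderiv (hermite n))"
    by (simp only: Suc pderiv_smult)
  also have "\<dots> = smult (2 * real (Suc n)) ([:0,2:] * hermite n - pderiv (hermite n)) + smult 2 (hermite (Suc n))"
    by (simp add: algebra_simps smult_diff_right)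
  also have "\<dots> = smult (2 * real (Suc n)) (hermite (Suc n)) + smult 2 (hermite (Suc n))"
    by (simp only: hermite.simps(2)[of n])
  also have "\<dots> = smult (2 * real (Suc (Suc n))) (hermite (Suc n))"
    by (simp add: smult_add_left[symmetric] algebra_simps)
  finally show ?case .
qed

lemma hermite_rec: "hermite (Suc (Suc n)) = [:0,2:] * hermite (Suc n) - smult (2 * real (Suc n)) (hermite n)"
  by (simp only: hermite.simps(2)[of "Suc n"] pderiv_hermite)

lemma poly_hermite_rec: "poly (hermite (Suc (Suc n))) x = 2 * x * poly (hermite (Suc n)) x - 2 * real (Suc n) * poly (hermite n) x"
  by (simp add: hermite_rec)

lemma hermite_parity: "poly (hermite n) (-x) = (-1)^n * poly (hermite n) x"
proof (induction n rule: nat_less_induct)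
  case (1 n)
  show ?case
  proof (cases n)
    case 0 then show ?thesis by simp
  next
    case (Suc m)
    show ?thesis
    proof (cases m)
      case 0 then show ?thesis using Suc by (simp add: hermite.simps)
    next
      case (Suc k)
      have "poly (hermite n) (-x) = 2 * (-x) * poly (hermite (Suc k)) (-x) - 2 * real (Suc k) * poly (hermite k) (-x)"
        using \<open>n = Suc m\<close> Suc poly_hermite_rec by simp
      also have "\<dots> = (-1)^n * poly (hermite n) x"
        using 1 \<open>n = Suc m\<close> Suc by (simp add: poly_hermite_rec algebra_simps)
      finally show ?thesis .
    qed
  qed
qed

lemma hermite_pos_aux:
  assumes "x > 0" "x^2 \<ge> 2 * real N"
  shows "m + 1 \<le> N \<Longrightarrow> poly (hermite (Suc m)) x \<ge> x * poly (hermite m) x \<and> poly (hermite m) x > 0"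
proof (induction m)
  case 0
  then show ?case using assms by (simp add: hermite.simps)
next
  case (Suc m)
  then have IH: "poly (hermite (Suc m)) x \<ge> x * poly (hermite m) x" "poly (hermite m) x > 0" by auto
  have pos: "poly (hermite (Suc m)) x > 0" using IH assms(1) by (smt (verit) mult_pos_pos)
  have h: "poly (hermite m) x \<le> poly (hermite (Suc m)) x / x" using IH assms(1) by (simp add: field_simps)
  have x2: "x * x \<ge> 2 * real (Suc m)" using assms Suc.prems by (simp add: power2_eq_square)
  have "x * poly (hermite (Suc m)) x \<le> 2 * x * poly (hermite (Suc m)) x - 2 * real (Suc m) * (poly (hermite (Suc m)) x / x)"
  proof -
    have "2 * real (Suc m) * (poly (hermite (Suc m)) x / x) \<le> x * poly (hermite (Suc m)) x"
    proof -
      have "2 * real (Suc m) * poly (hermite (Suc m)) x \<le> (x * x) * poly (hermite (Suc m)) x"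
        using x2 pos by (intro mult_right_mono) auto
      then show ?thesis using assms(1) by (simp add: field_simps)
    qed
    then show ?thesis by simp
  qed
  also have "\<dots> \<le> 2 * x * poly (hermite (Suc m)) x - 2 * real (Suc m) * poly (hermite m) x"
    using h by (intro diff_left_mono mult_left_mono) auto
  also have "\<dots> = poly (hermite (Suc (Suc m))) x"
    by (rule poly_hermite_rec[symmetric])
  finally show ?case using pos by simp
qed

lemma hermite_root_bound:
  assumes "poly (hermite N) x = 0" shows "x^2 < 2 * real N"
proof (rule ccontr)
  assume "\<not> ?thesis"
  hence x2: "x^2 \<ge> 2 * real N" by simp
  show False
  proof (cases "x = 0")
    case True
    then have "N = 0" using x2 by simp
    then show False using assms by simp
  next
    case False
    have "poly (hermite N) \<bar>x\<bar> > 0"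
    proof (cases N)
      case 0 then show ?thesis by simp
    next
      case (Suc m)
      have "poly (hermite (Suc m)) \<bar>x\<bar> \<ge> \<bar>x\<bar> * poly (hermite m) \<bar>x\<bar>" "poly (hermite m) \<bar>x\<bar> > 0"
        using hermite_pos_aux[of "\<bar>x\<bar>" N m] x2 False Suc by auto
      then show ?thesis using Suc False by (smt (verit) mult_pos_pos zero_less_abs_iff)
    qed
    moreover have "poly (hermite N) \<bar>x\<bar> = 0"
      using assms hermite_parity[of N x] by (cases "x \<ge> 0") (auto simp: hermite_parity)
    ultimately show False by simp
  qed
qed

definition RS :: "real poly \<Rightarrow> bool" where
  "RS p \<longleftrightarrow> p \<noteq> 0 \<and> card (real_zeros p) = degree p"

lemma finite_real_zeros: "p \<noteq> 0 \<Longrightarrow> finite (real_zeros p)"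
  unfolding real_zeros_def by (rule poly_roots_finite)

lemma Sa_degree:
  assumes "f \<noteq> 0"
  shows "degree (Sa a f) = Suc (degree f)" "lead_coeff (Sa a f) = 2 * lead_coeff f"
proof -
  have d1: "degree ([:-a,2:] * f) = Suc (degree f)" using assms by (subst degree_mult_eq) auto
  have l1: "lead_coeff ([:-a,2:] * f) = 2 * lead_coeff f" by (subst lead_coeff_mult) simp
  have d2: "degree (pderiv f) < Suc (degree f)" by (simp add: degree_pderiv)
  have "degree ([:-a,2:] * f + (- pderiv f)) = Suc (degree f)"
    using d1 d2 by (subst degree_add_eq_left) auto
  then show "degree (Sa a f) = Suc (degree f)" by (simp add: Sa_def)
  have "coeff (Sa a f) (Suc (degree f)) = coeff ([:-a,2:] * f) (Suc (degree f))"
    using d2 by (simp add: Sa_def coeff_eq_0)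
  then show "lead_coeff (Sa a f) = 2 * lead_coeff f"
    using \<open>degree (Sa a f) = Suc (degree f)\<close> d1 l1 by simp
qed

lemma Sa_nonzero: "f \<noteq> 0 \<Longrightarrow> Sa a f \<noteq> 0"
  using Sa_degree(2)[of f a] by auto

lemma prod_dvd_roots:
  fixes p :: "real poly"
  assumes "finite Z" "\<forall>z\<in>Z. poly p z = 0"
  shows "(\<Prod>z\<in>Z. [:-z,1:]) dvd p"
  using assms
proof (induction Z arbitrary: p rule: finite_induct)
  case empty then show ?case by simp
next
  case (insert w Z)
  have "[:-w,1:] dvd p" using insert.prems by (simp add: poly_eq_0_iff_dvd)
  then obtain h where h: "p = [:-w,1:] * h" by (elim dvdE)
  have "\<forall>z\<in>Z. poly h z = 0"
  proof
    fix z assume "z \<in> Z"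
    then have "z \<noteq> w" "poly p z = 0" using insert by auto
    then show "poly h z = 0" using h by simp
  qed
  then have "(\<Prod>z\<in>Z. [:-z,1:]) dvd h" by (rule insert.IH)
  moreover have "(\<Prod>z\<in>insert w Z. [:-z,1:]) = [:-w,1:] * (\<Prod>z\<in>Z. [:-z,1:])"
    by (rule prod.insert[OF insert.hyps])
  ultimately show ?case using h by (metis mult_dvd_mono dvd_refl)
qed

lemma RS_prod:
  assumes "RS p"
  shows "p = smult (lead_coeff p) (\<Prod>z\<in>real_zeros p. [:-z,1:])"
proof -
  have p0: "p \<noteq> 0" and c: "card (real_zeros p) = degree p" using assms by (auto simp: RS_def)
  have fin: "finite (real_zeros p)" using p0 by (rule finite_real_zeros)
  define P where "P = (\<Prod>z\<in>real_zeros p. [:-z,1:])"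
  have P0: "P \<noteq> 0" unfolding P_def using fin by (subst prod_zero_iff) auto
  have "degree P = (\<Sum>z\<in>real_zeros p. degree [:-z,1:])" unfolding P_def
    by (rule degree_prod_eq_sum_degree) auto
  then have degP: "degree P = degree p" using c by simp
  have lcP: "lead_coeff P = 1" unfolding P_def by (subst lead_coeff_prod) simp
  have "P dvd p" unfolding P_def using fin by (intro prod_dvd_roots) (auto simp: real_zeros_def)
  then obtain h where h: "p = P * h" by (elim dvdE)
  have h0: "h \<noteq> 0" using h p0 by (metis mult_zero_right)
  have "degree p = degree P + degree h" unfolding h using P0 h0 by (rule degree_mult_eq)
  then have "degree h = 0" using degP by linarith
  then obtain c where hc: "h = [:c:]" by (elim degree_eq_zeroE)
  have "lead_coeff p = lead_coeff P * lead_coeff h" unfolding h by (rule lead_coeff_mult)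
  then have "lead_coeff p = c" using hc lcP by simp
  have "p = smult c P" unfolding h hc by simp
  then show ?thesis using \<open>lead_coeff p = c\<close> P_def by simp
qed

lemma sign_aux1: "(-1::real)^Suc c * ((x - w) * Q) = (w - x) * ((-1)^c * Q)"
  by (simp add: algebra_simps)

lemma sign_aux2: "(-1::real)^c * ((x - w) * Q) = (x - w) * ((-1)^c * Q)"
  by (simp add: algebra_simps)

lemma prod_sign:
  fixes Z :: "real set"
  assumes "finite Z" "x \<notin> Z"
  shows "(-1) ^ card {z\<in>Z. x < z} * (\<Prod>z\<in>Z. (x - z)) > 0"
  using assms
proof (induction Z rule: finite_induct)
  case empty then show ?case by simp
next
  case (insert w Z)
  have xw: "x \<noteq> w" and xZ: "x \<notin> Z" using insert.prems by auto
  have IH: "(-1) ^ card {z\<in>Z. x < z} * (\<Prod>z\<in>Z. (x - z)) > 0" using insert.IH xZ .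
  have fin: "finite {z\<in>Z. x < z}" using insert.hyps by simp
  show ?case
  proof (cases "x < w")
    case True
    have "{z\<in>insert w Z. x < z} = insert w {z\<in>Z. x < z}" using True by auto
    then have "card {z\<in>insert w Z. x < z} = Suc (card {z\<in>Z. x < z})"
      using fin insert.hyps by simp
    then have "(-1) ^ card {z\<in>insert w Z. x < z} * (\<Prod>z\<in>insert w Z. (x - z))
        = (w - x) * ((-1) ^ card {z\<in>Z. x < z} * (\<Prod>z\<in>Z. (x - z)))"
      using insert.hyps by (simp only: prod.insert[OF insert.hyps] sign_aux1)
    then show ?thesis using IH True by simp
  next
    case False
    then have "w < x" using xw by simp
    have "{z\<in>insert w Z. x < z} = {z\<in>Z. x < z}" using False by auto
    then have "(-1) ^ card {z\<in>insert w Z. x < z} * (\<Prod>z\<in>insert w Z. (x - z))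
        = (x - w) * ((-1) ^ card {z\<in>Z. x < z} * (\<Prod>z\<in>Z. (x - z)))"
      using insert.hyps by (simp only: prod.insert[OF insert.hyps] sign_aux2)
    then show ?thesis using IH \<open>w < x\<close> by simp
  qed
qed

lemma RS_sign:
  assumes "RS p" "lead_coeff p > 0" "poly p x \<noteq> 0"
  shows "(-1) ^ card {z\<in>real_zeros p. x < z} * poly p x > 0"
proof -
  have fin: "finite (real_zeros p)" using assms(1) by (simp add: RS_def finite_real_zeros)
  have xn: "x \<notin> real_zeros p" using assms(3) by (simp add: real_zeros_def)
  have "poly p x = lead_coeff p * (\<Prod>z\<in>real_zeros p. (x - z))"
    by (subst RS_prod[OF assms(1)]) (simp add: poly_prod)
  then show ?thesis using prod_sign[OF fin xn] assms(2)
    by (simp add: mult.left_commute)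
qed

lemma RS_deriv_sign:
  assumes "RS p" "lead_coeff p > 0" "poly p r = 0"
  shows "(-1) ^ card {z\<in>real_zeros p. r < z} * poly (pderiv p) r > 0"
proof -
  define Z where "Z = real_zeros p"
  have fin: "finite Z" using assms(1) by (simp add: RS_def finite_real_zeros Z_def)
  have rZ: "r \<in> Z" using assms(3) by (simp add: real_zeros_def Z_def)
  have Zr: "Z = insert r (Z - {r})" using rZ by auto
  define h where "h = smult (lead_coeff p) (\<Prod>z\<in>Z - {r}. [:-z,1:])"
  have "p = smult (lead_coeff p) (\<Prod>z\<in>Z. [:-z,1:])" using RS_prod[OF assms(1)] Z_def by simp
  also have "\<dots> = smult (lead_coeff p) ([:-r,1:] * (\<Prod>z\<in>Z - {r}. [:-z,1:]))"
    using fin rZ by (subst Zr, subst prod.insert) auto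
  finally have p: "p = [:-r,1:] * h" by (simp add: h_def)
  have "pderiv p = [:-r,1:] * pderiv h + h * pderiv [:-r,1:]"
    by (subst p) (rule pderiv_mult)
  then have "poly (pderiv p) r = poly h r"
    by (simp add: pderiv_pCons)
  also have "\<dots> = lead_coeff p * (\<Prod>z\<in>Z - {r}. (r - z))" by (simp add: h_def poly_prod)
  finally have d: "poly (pderiv p) r = lead_coeff p * (\<Prod>z\<in>Z - {r}. (r - z))" .
  have "{z\<in>Z - {r}. r < z} = {z\<in>Z. r < z}" by auto
  then have "(-1) ^ card {z\<in>Z. r < z} * (\<Prod>z\<in>Z - {r}. (r - z)) > 0"
    using prod_sign[of "Z - {r}" r] fin by simp
  then show ?thesis using d assms(2) Z_def by (simp add: mult.left_commute)
qed

lemma sorted_le_nth: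
  assumes "sorted_wrt (<) xs" "i \<le> j" "j < length xs"
  shows "xs!i \<le> (xs!j :: real)"
  using assms sorted_wrt_nth_less[of "(<)" xs i j] by (cases "i = j") auto

lemma card_greater_sorted:
  fixes xs :: "real list"
  assumes srt: "sorted_wrt (<) xs" and i: "i \<le> length xs"
    and lo: "\<forall>j<i. xs!j \<le> x" and hi: "\<forall>j. i \<le> j \<and> j < length xs \<longrightarrow> x < xs!j"
  shows "card {z\<in>set xs. x < z} = length xs - i"
proof -
  have dist: "distinct xs" using srt by (simp add: strict_sorted_iff)
  have "{z\<in>set xs. x < z} = (\<lambda>j. xs!j) ` {i..<length xs}"
  proof
    show "{z\<in>set xs. x < z} \<subseteq> (\<lambda>j. xs!j) ` {i..<length xs}"
    proof
      fix z assume "z \<in> {z\<in>set xs. x < z}"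
      then obtain j where j: "j < length xs" "z = xs!j" "x < z" by (auto simp: in_set_conv_nth)
      have "\<not> j < i" using lo j by force
      then show "z \<in> (\<lambda>j. xs!j) ` {i..<length xs}" using j by auto
    qed
    show "(\<lambda>j. xs!j) ` {i..<length xs} \<subseteq> {z\<in>set xs. x < z}"
      using hi by auto
  qed
  moreover have "inj_on (\<lambda>j. xs!j) {i..<length xs}"
    using dist by (intro inj_on_nth) auto
  ultimately show ?thesis by (simp add: card_image)
qed

lemma alternation:
  fixes p :: "real poly"
  assumes p0: "p \<noteq> 0" and len: "length ys = Suc (degree p)" and srt: "sorted_wrt (<) ys"
    and sgn: "\<forall>i\<le>degree p. (-1)^(degree p - i) * poly p (ys!i) > 0"
  shows "RS p \<and> (\<exists>zs. sorted_wrt (<) zs \<and> set zs = real_zeros p \<and> length zs = degree p \<and>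
            (\<forall>i<degree p. ys!i < zs!i \<and> zs!i < ys!Suc i))"
proof -
  define d where "d = degree p"
  have ex: "\<forall>i<d. \<exists>z. ys!i < z \<and> z < ys!Suc i \<and> poly p z = 0"
  proof (intro allI impI)
    fix i assume i: "i < d"
    define s :: real where "s = (-1)^(d - Suc i)"
    have s2: "s * s = 1" unfolding s_def by (simp flip: power_add)
    have e: "(-1::real)^(d - i) = - s" unfolding s_def using i
      by (metis Suc_diff_Suc mult_minus1 power_Suc)
    have a1: "s * poly p (ys!Suc i) > 0" using sgn i unfolding s_def d_def by auto
    have a0: "- s * poly p (ys!i) > 0" using sgn i e unfolding d_def by (metis less_imp_le_nat)
    have "(s * poly p (ys!Suc i)) * (- s * poly p (ys!i)) > 0" using mult_pos_pos[OF a1 a0] .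
    then have "- (s * s) * (poly p (ys!i) * poly p (ys!Suc i)) > 0" by (simp add: algebra_simps)
    then have "poly p (ys!i) * poly p (ys!Suc i) < 0" using s2 by simp
    moreover have "ys!i < ys!Suc i" using sorted_wrt_nth_less[OF srt, of i "Suc i"] len i d_def by simp
    ultimately show "\<exists>z. ys!i < z \<and> z < ys!Suc i \<and> poly p z = 0"
      using poly_IVT by blast
  qed
  then obtain f where f: "\<forall>i<d. ys!i < f i \<and> f i < ys!Suc i \<and> poly p (f i) = 0"
    by metis
  define zs where "zs = map f [0..<d]"
  have lz: "length zs = d" by (simp add: zs_def)
  have nz: "\<And>i. i < d \<Longrightarrow> zs!i = f i" by (simp add: zs_def)
  have szs: "sorted_wrt (<) zs"
  proof (unfold sorted_wrt_iff_nth_less, intro allI impI)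
    fix i j assume ij: "i < j" "j < length zs"
    have "f i < ys!Suc i" using f ij lz by auto
    also have "ys!Suc i \<le> ys!j" using ij lz len d_def by (intro sorted_le_nth[OF srt]) auto
    also have "ys!j < f j" using f ij lz by auto
    finally show "zs!i < zs!j" using nz ij lz by auto
  qed
  have sub: "set zs \<subseteq> real_zeros p"
    using f by (auto simp: zs_def real_zeros_def)
  have fin: "finite (real_zeros p)" using p0 by (rule finite_real_zeros)
  have cz: "card (set zs) = d" using szs lz by (simp add: strict_sorted_iff distinct_card)
  have cb: "card (real_zeros p) \<le> d" unfolding real_zeros_def d_def using p0 by (rule card_poly_roots_bound)
  have eq: "set zs = real_zeros p"
    using card_subset_eq[OF fin sub] cz cb card_mono[OF fin sub] by simp
  have "RS p" using p0 eq cz d_def by (simp add: RS_def)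
  moreover have "\<forall>i<degree p. ys!i < zs!i \<and> zs!i < ys!Suc i" using f nz d_def by auto
  ultimately show ?thesis using szs eq lz d_def by blast
qed

lemma poly_pos_pinf:
  fixes p :: "real poly"
  assumes "lead_coeff p > 0"
  shows "\<exists>M. \<forall>x\<ge>M. poly p x > 0"
  using poly_pinfty_gt_lc[OF assms] assms by (metis less_le_trans)

lemma poly_pos_minf:
  fixes p :: "real poly"
  assumes "lead_coeff p > 0"
  shows "\<exists>M. \<forall>x\<le>M. (-1)^degree p * poly p x > 0"
proof -
  define q where "q = smult ((-1)^degree p) (pcompose p [:0,-1:])"
  have "lead_coeff (pcompose p [:0,-1:]) = lead_coeff p * (-1)^degree p"
    by (subst lead_coeff_comp) auto
  then have "lead_coeff q = lead_coeff p"
    unfolding q_def by (simp add: mult.assoc[symmetric] flip: power_add)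
  then obtain M where M: "\<forall>x\<ge>M. poly q x > 0" using poly_pos_pinf assms by metis
  have "\<forall>x\<le>-M. (-1)^degree p * poly p x > 0"
  proof (intro allI impI)
    fix x :: real assume "x \<le> -M"
    then have "poly q (-x) > 0" using M by auto
    then show "(-1)^degree p * poly p x > 0" by (simp add: q_def poly_pcompose)
  qed
  then show ?thesis by blast
qed

lemma step:
  fixes f :: "real poly"
  assumes rs: "RS f" and lc: "lead_coeff f > 0" and szs: "sorted_wrt (<) zs"
    and setz: "set zs = real_zeros f" and lz: "length zs = degree f"
  shows "RS (Sa a f) \<and> lead_coeff (Sa a f) > 0 \<and> degree (Sa a f) = Suc (degree f) \<and>
         (\<exists>ws. sorted_wrt (<) ws \<and> set ws = real_zeros (Sa a f) \<and> length ws = Suc (degree f) \<and>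
            (\<forall>i<degree f. ws!i < zs!i \<and> zs!i < ws!Suc i))"
proof -
  define d where "d = degree f"
  define g where "g = Sa a f"
  have f0: "f \<noteq> 0" using rs by (simp add: RS_def)
  have dg: "degree g = Suc d" and lg: "lead_coeff g = 2 * lead_coeff f"
    using Sa_degree[OF f0] unfolding g_def d_def by auto
  have g0: "g \<noteq> 0" using lg lc by auto
  have lgp: "lead_coeff g > 0" using lg lc by simp
  obtain M1 where M1: "\<forall>x\<ge>M1. poly g x > 0" using poly_pos_pinf[OF lgp] by blast
  obtain M0 where M0: "\<forall>x\<le>M0. (-1)^Suc d * poly g x > 0" using poly_pos_minf[OF lgp] dg by metis
  define B where "B = (\<Sum>z\<in>set zs. \<bar>z\<bar>)"
  have zB: "\<And>z. z \<in> set zs \<Longrightarrow> \<bar>z\<bar> \<le> B"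
    unfolding B_def by (rule member_le_sum) auto
  have B0: "B \<ge> 0" unfolding B_def by (rule sum_nonneg) auto
  define y0 where "y0 = - (\<bar>M0\<bar> + B + 1)"
  define y1 where "y1 = \<bar>M1\<bar> + B + 1"
  define ys where "ys = y0 # zs @ [y1]"
  have lys: "length ys = Suc (degree g)" using dg lz d_def by (simp add: ys_def)
  have sys: "sorted_wrt (<) ys"
    unfolding ys_def using szs
    by (auto simp: sorted_wrt_append y0_def y1_def) (smt (verit) zB B0)+
  have sg: "\<forall>i\<le>degree g. (-1)^(degree g - i) * poly g (ys!i) > 0"
  proof (intro allI impI)
    fix i assume i: "i \<le> degree g"
    show "(-1)^(degree g - i) * poly g (ys!i) > 0"
    proof (cases i)
      case 0
      have "y0 \<le> M0" by (simp add: y0_def) (smt (verit) B_def sum_nonneg abs_ge_zero)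
      then show ?thesis using M0 0 dg by (simp add: ys_def)
    next
      case (Suc j)
      show ?thesis
      proof (cases "j < d")
        case True
        define r where "r = zs!j"
        have ysi: "ys!i = r" using Suc True lz d_def by (simp add: ys_def nth_append r_def)
        have rz: "poly f r = 0" using setz True lz d_def unfolding r_def real_zeros_def
          by (metis mem_Collect_eq nth_mem)
        have cnt: "card {z\<in>real_zeros f. r < z} = d - Suc j"
        proof -
          have "card {z\<in>set zs. r < z} = length zs - Suc j"
          proof (rule card_greater_sorted[OF szs])
            show "Suc j \<le> length zs" using True lz d_def by simp
            show "\<forall>k<Suc j. zs!k \<le> r" using sorted_le_nth[OF szs] True lz d_def r_def by auto
            show "\<forall>k. Suc j \<le> k \<and> k < length zs \<longrightarrow> r < zs!k"
              using sorted_wrt_nth_less[OF szs] r_def by auto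
          qed
          then show ?thesis using setz lz d_def by simp
        qed
        have ds: "(-1)^(d - Suc j) * poly (pderiv f) r > 0"
          using RS_deriv_sign[OF rs lc rz] cnt by simp
        have gr: "poly g r = - poly (pderiv f) r" using rz by (simp add: g_def Sa_def)
        have "degree g - i = Suc (d - Suc j)" using dg Suc True by simp
        then show ?thesis using ds gr ysi by simp
      next
        case False
        then have "j = d" using i Suc dg by simp
        then have "ys!i = y1" using Suc lz d_def by (simp add: ys_def nth_append)
        moreover have "y1 \<ge> M1" by (simp add: y1_def) (smt (verit) B_def sum_nonneg abs_ge_zero)
        moreover have "degree g - i = 0" using Suc \<open>j = d\<close> dg by simp
        ultimately show ?thesis using M1 by simp
      qed
    qed
  qed
  obtain ws where ws: "sorted_wrt (<) ws" "set ws = real_zeros g" "length ws = degree g"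
      "\<forall>i<degree g. ys!i < ws!i \<and> ws!i < ys!Suc i" and rsg: "RS g"
    using alternation[OF g0 lys sys sg] by blast
  have "\<forall>i<d. ws!i < zs!i \<and> zs!i < ws!Suc i"
  proof (intro allI impI)
    fix i assume i: "i < d"
    have "ys!Suc i = zs!i" using i lz d_def by (simp add: ys_def nth_append)
    moreover have "ws!i < ys!Suc i" using ws(4) i dg by simp
    moreover have "ys!Suc i < ws!Suc i" using ws(4) i dg by simp
    ultimately show "ws!i < zs!i \<and> zs!i < ws!Suc i" by simp
  qed
  then show ?thesis using rsg lgp dg ws g_def d_def by auto
qed

lemma interlaces_lists:
  fixes us vs :: "real list"
  assumes su: "sorted_wrt (<) us" and sv: "sorted_wrt (<) vs"
    and l: "length us = Suc (length vs)" and ne: "vs \<noteq> []"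
    and il: "\<forall>i<length vs. us!i < vs!i \<and> vs!i < us!Suc i"
  shows "interlaces (set us) (set vs)"
proof -
  have une: "us \<noteq> []" using l by auto
  have minu: "Min (set us) = us!0"
    using une sorted_le_nth[OF su] by (intro Min_eqI) (auto simp: in_set_conv_nth)
  have minv: "Min (set vs) = vs!0"
    using ne sorted_le_nth[OF sv] by (intro Min_eqI) (auto simp: in_set_conv_nth)
  have m: "Min (set us) < Min (set vs)" using minu minv il ne by auto
  have c1: "\<forall>a b. consecutive (set us) a b \<longrightarrow> (\<exists>v\<in>set vs. a < v \<and> v < b)"
  proof (intro allI impI)
    fix a b assume "consecutive (set us) a b"
    then have ab: "a \<in> set us" "b \<in> set us" "a < b" "\<not> (\<exists>u\<in>set us. a < u \<and> u < b)"
      by (auto simp: consecutive_def)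
    obtain i j where ij: "i < length us" "j < length us" "a = us!i" "b = us!j"
      using ab by (auto simp: in_set_conv_nth)
    have "i < j" using ab ij sorted_le_nth[OF su, of j i] by (cases "i < j") auto
    have "j = Suc i"
    proof (rule ccontr)
      assume "j \<noteq> Suc i"
      then have "Suc i < j" using \<open>i < j\<close> by simp
      then have "a < us!Suc i" "us!Suc i < b"
        using ij sorted_wrt_nth_less[OF su] by auto
      then show False using ab ij \<open>Suc i < j\<close> by (meson nth_mem order.strict_trans)
    qed
    then have "i < length vs" using ij l by simp
    then show "\<exists>v\<in>set vs. a < v \<and> v < b" using il ij \<open>j = Suc i\<close> by (meson nth_mem)
  qed
  have c2: "\<forall>a b. consecutive (set vs) a b \<longrightarrow> (\<exists>u\<in>set us. a < u \<and> u < b)"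
  proof (intro allI impI)
    fix a b assume "consecutive (set vs) a b"
    then have ab: "a \<in> set vs" "b \<in> set vs" "a < b"
      by (auto simp: consecutive_def)
    obtain i j where ij: "i < length vs" "j < length vs" "a = vs!i" "b = vs!j"
      using ab by (auto simp: in_set_conv_nth)
    have "i < j" using ab ij sorted_le_nth[OF sv, of j i] by (cases "i < j") auto
    have "a < us!Suc i" using il ij by auto
    moreover have "us!Suc i \<le> us!j" using ij \<open>i < j\<close> l by (intro sorted_le_nth[OF su]) auto
    moreover have "us!j < b" using il ij by auto
    moreover have "Suc i < length us" using ij l by simp
    ultimately show "\<exists>u\<in>set us. a < u \<and> u < b" by (meson nth_mem order.strict_trans1)
  qed
  show ?thesis unfolding interlaces_def using m c1 c2 ne une by simp
qed

definition opS :: "real poly \<Rightarrow> real poly \<Rightarrow> real poly" where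
  "opS p f = (\<Sum>i\<le>degree p. smult (coeff p i) ((Sa 0 ^^ i) f))"

lemma Sa_add: "Sa a (f + g) = Sa a f + Sa a g"
  by (simp add: Sa_def pderiv_add algebra_simps del: mult_pCons_left mult_pCons_right)

lemma Sa_smult: "Sa a (smult c f) = smult c (Sa a f)"
  by (simp only: Sa_def pderiv_smult mult_smult_right smult_diff_right)

lemma Sa_diff: "Sa a (f - g) = Sa a f - Sa a g"
  by (simp only: Sa_def pderiv_diff right_diff_distrib diff_diff_eq diff_add_eq diff_diff_eq2 add.commute add.left_commute)

lemma Sa_zero [simp]: "Sa a 0 = 0"
  by (simp add: Sa_def)

lemma Sa_sum: "Sa a (\<Sum>i\<in>I. g i) = (\<Sum>i\<in>I. Sa a (g i))"
  by (induction I rule: infinite_finite_induct) (auto simp: Sa_add)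

lemma Sa_aux: "[:-a,2:] * (f :: real poly) = [:0,2:] * f - smult a f"
  by simp

lemma Sa_shift: "Sa a f = Sa 0 f - smult a f"
  by (simp only: Sa_def Sa_aux[of a] Sa_aux[of 0] diff_right_commute smult_0_left diff_zero)

lemma Sa_comm: "Sa a (Sa b f) = Sa b (Sa a f)"
proof -
  have "Sa a (Sa b f) = Sa 0 (Sa 0 f) - smult b (Sa 0 f) - smult a (Sa 0 f) + smult (a*b) f"
    by (simp only: Sa_shift[of a] Sa_shift[of b] Sa_diff Sa_smult) (simp add: algebra_simps smult_diff_right del: mult_pCons_left mult_pCons_right)
  moreover have "Sa b (Sa a f) = Sa 0 (Sa 0 f) - smult b (Sa 0 f) - smult a (Sa 0 f) + smult (a*b) f"
    by (simp only: Sa_shift[of a] Sa_shift[of b] Sa_diff Sa_smult) (simp add: algebra_simps smult_diff_right del: mult_pCons_left mult_pCons_right)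
  ultimately show ?thesis by simp
qed

lemma Sa_funpow_comm: "Sa a ((Sa b ^^ i) f) = (Sa b ^^ i) (Sa a f)"
  by (induction i) (simp, metis Sa_comm funpow.simps(2) o_apply)

lemma opS_bound:
  assumes "degree p \<le> N"
  shows "opS p f = (\<Sum>i\<le>N. smult (coeff p i) ((Sa 0 ^^ i) f))"
  unfolding opS_def
proof (rule sum.mono_neutral_left)
  show "\<forall>i\<in>{..N} - {..degree p}. smult (coeff p i) ((Sa 0 ^^ i) f) = 0"
    by (auto simp: coeff_eq_0)
qed (use assms in auto)

lemma opS_zero [simp]: "opS 0 f = 0"
  by (simp add: opS_def)

lemma opS_pCons: "opS (pCons a p) f = smult a f + opS p (Sa 0 f)"
proof -
  have "opS (pCons a p) f = (\<Sum>i\<le>Suc (degree p). smult (coeff (pCons a p) i) ((Sa 0 ^^ i) f))"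
    by (rule opS_bound) (simp add: degree_pCons_le)
  also have "\<dots> = smult a f + (\<Sum>i\<le>degree p. smult (coeff p i) ((Sa 0 ^^ Suc i) f))"
    by (subst sum.atMost_Suc_shift) simp
  also have "(\<Sum>i\<le>degree p. smult (coeff p i) ((Sa 0 ^^ Suc i) f)) = opS p (Sa 0 f)"
    unfolding opS_def by (intro sum.cong refl) (simp add: funpow_swap1)
  finally show ?thesis .
qed

lemma opS_add: "opS (p + q) f = opS p f + opS q f"
proof -
  define N where "N = max (degree p) (degree q)"
  have "opS (p + q) f = (\<Sum>i\<le>N. smult (coeff (p + q) i) ((Sa 0 ^^ i) f))"
    by (rule opS_bound) (simp add: N_def degree_add_le)
  also have "\<dots> = (\<Sum>i\<le>N. smult (coeff p i) ((Sa 0 ^^ i) f)) + (\<Sum>i\<le>N. smult (coeff q i) ((Sa 0 ^^ i) f))"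
    by (simp add: smult_add_left sum.distrib)
  also have "\<dots> = opS p f + opS q f"
    by (subst (1 2) opS_bound[symmetric]) (auto simp: N_def)
  finally show ?thesis .
qed

lemma smult_sum_right: "smult c (\<Sum>i\<in>I. g i) = (\<Sum>i\<in>I. smult c (g i))"
  by (induction I rule: infinite_finite_induct) (auto simp: smult_add_right)

lemma opS_smult: "opS (smult c p) f = smult c (opS p f)"
proof -
  have "opS (smult c p) f = (\<Sum>i\<le>degree p. smult (coeff (smult c p) i) ((Sa 0 ^^ i) f))"
    by (rule opS_bound) simp
  also have "\<dots> = smult c (opS p f)"
    by (simp add: opS_def smult_sum_right)
  finally show ?thesis .
qed

lemma opS_sum: "opS (\<Sum>i\<in>I. g i) f = (\<Sum>i\<in>I. opS (g i) f)"
  by (induction I rule: infinite_finite_induct) (auto simp: opS_add)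

lemma Sa_opS: "Sa a (opS p f) = opS p (Sa a f)"
  unfolding opS_def by (simp add: Sa_sum Sa_smult Sa_funpow_comm)

lemma opS_mult: "opS (p * q) f = opS p (opS q f)"
proof (induction p arbitrary: f)
  case 0
  then show ?case by simp
next
  case (pCons a p)
  have "opS (pCons a p * q) f = opS (smult a q + pCons 0 (p * q)) f" by simp
  also have "\<dots> = smult a (opS q f) + opS (p * q) (Sa 0 f)"
    by (simp add: opS_add opS_smult opS_pCons)
  also have "\<dots> = smult a (opS q f) + opS p (Sa 0 (opS q f))"
    by (simp add: pCons.IH Sa_opS)
  also have "\<dots> = opS (pCons a p) (opS q f)" by (simp add: opS_pCons)
  finally show ?case .
qed

lemma opS_const [simp]: "opS [:c:] f = smult c f"
  by (simp add: opS_pCons)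

lemma opS_one [simp]: "opS 1 f = f"
  using opS_const[of 1 f] by (simp add: one_pCons)

lemma opS_linear: "opS [:-r, 1:] f = Sa r f"
  by (simp add: opS_pCons Sa_shift[of r] algebra_simps)

lemma opS_monom: "opS (monom c i) f = smult c ((Sa 0 ^^ i) f)"
proof (induction i arbitrary: f)
  case 0 then show ?case by (simp add: monom_0)
next
  case (Suc i)
  then show ?case by (simp add: monom_Suc opS_pCons funpow_swap1)
qed

lemma hermite_funpow: "hermite n = (Sa 0 ^^ n) 1"
  by (induction n) (auto simp: hermite_Suc')

lemma opS_degree:
  assumes "f \<noteq> 0" "p \<noteq> 0"
  shows "opS p f \<noteq> 0 \<and> degree (opS p f) = degree p + degree f \<and>
         lead_coeff (opS p f) = lead_coeff p * 2 ^ degree p * lead_coeff f"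
  using assms
proof (induction p arbitrary: f)
  case 0 then show ?case by simp
next
  case (pCons a p)
  show ?case
  proof (cases "p = 0")
    case True
    then have "a \<noteq> 0" using pCons by simp
    then show ?thesis using True pCons.prems by (simp add: opS_pCons)
  next
    case False
    have Sf0: "Sa 0 f \<noteq> 0" using pCons.prems by (simp add: Sa_nonzero)
    have IH: "opS p (Sa 0 f) \<noteq> 0" "degree (opS p (Sa 0 f)) = degree p + Suc (degree f)"
      "lead_coeff (opS p (Sa 0 f)) = lead_coeff p * 2 ^ degree p * (2 * lead_coeff f)"
      using pCons.IH[OF Sf0 False] Sa_degree[OF pCons.prems(1)] by auto
    have dl: "degree (smult a f) < degree (opS p (Sa 0 f))" using IH(2) by simp
    have d: "degree (opS (pCons a p) f) = degree p + Suc (degree f)"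
      unfolding opS_pCons using dl IH(2) by (simp add: degree_add_eq_right)
    have l: "lead_coeff (opS (pCons a p) f) = lead_coeff p * 2 ^ degree p * (2 * lead_coeff f)"
      unfolding opS_pCons using dl IH(3) by (subst lead_coeff_add_le) auto
    have "lead_coeff p \<noteq> 0" "lead_coeff f \<noteq> 0" using False pCons.prems by auto
    then have "opS (pCons a p) f \<noteq> 0" using l by auto
    then show ?thesis using d l False by simp
  qed
qed

lemma coeff_Ppoly: "coeff (Ppoly K \<gamma>) i = (if i \<le> K then \<gamma> (K - i) else 0)"
proof -
  have "coeff (Ppoly K \<gamma>) i = (\<Sum>j\<le>K. if K - j = i then \<gamma> j else 0)"
    by (simp add: Ppoly_def coeff_sum coeff_monom)
  also have "\<dots> = (\<Sum>j\<le>K. if j = K - i \<and> i \<le> K then \<gamma> j else 0)"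
    by (intro sum.cong refl) auto
  also have "\<dots> = (if i \<le> K then \<gamma> (K - i) else 0)"
    by (cases "i \<le> K") auto
  finally show ?thesis .
qed

lemma Ppoly_degree:
  assumes "\<gamma> 0 = 1"
  shows "degree (Ppoly K \<gamma>) = K" "lead_coeff (Ppoly K \<gamma>) = 1" "Ppoly K \<gamma> \<noteq> 0"
proof -
  have le: "degree (Ppoly K \<gamma>) \<le> K" by (rule degree_le) (simp add: coeff_Ppoly)
  have "coeff (Ppoly K \<gamma>) K = 1" using assms by (simp add: coeff_Ppoly)
  then have "K \<le> degree (Ppoly K \<gamma>)" by (metis le_degree zero_neq_one)
  then show dK: "degree (Ppoly K \<gamma>) = K" using le by simp
  show "lead_coeff (Ppoly K \<gamma>) = 1" using dK assms by (simp add: coeff_Ppoly)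
  then show "Ppoly K \<gamma> \<noteq> 0" by auto
qed

lemma qpoly_opS:
  assumes "K \<le> n"
  shows "qpoly K \<gamma> n = opS (Ppoly K \<gamma>) (hermite (n - K))"
proof -
  have "monom 1 (n - K) * Ppoly K \<gamma> = (\<Sum>j\<le>K. monom (\<gamma> j) (n - j))"
    unfolding Ppoly_def sum_distrib_left
    by (intro sum.cong refl) (use assms in \<open>auto simp: mult_monom\<close>)
  then have "opS (monom 1 (n - K) * Ppoly K \<gamma>) 1 = (\<Sum>j\<le>K. smult (\<gamma> j) (hermite (n - j)))"
    by (simp add: opS_sum opS_monom hermite_funpow)
  moreover have "opS (monom 1 (n - K) * Ppoly K \<gamma>) 1 = opS (Ppoly K \<gamma>) (hermite (n - K))"
    by (simp add: mult.commute[of "monom 1 (n - K)"] opS_mult opS_monom hermite_funpow)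
  ultimately show ?thesis by (simp add: qpoly_def)
qed

lemma roots_list:
  assumes "RS p"
  shows "\<exists>zs. sorted_wrt (<) zs \<and> set zs = real_zeros p \<and> length zs = degree p"
proof -
  have fin: "finite (real_zeros p)" using assms by (simp add: RS_def finite_real_zeros)
  obtain l where "sorted_wrt (<) l" "set l = real_zeros p" "length l = card (real_zeros p)"
    using finite_set_strict_sorted[OF fin] by blast
  then show ?thesis using assms by (auto simp: RS_def)
qed

lemma step_simple:
  assumes "RS f" "lead_coeff f > 0"
  shows "RS (Sa a f) \<and> lead_coeff (Sa a f) > 0 \<and> degree (Sa a f) = Suc (degree f)"
proof -
  obtain zs where "sorted_wrt (<) zs" "set zs = real_zeros f" "length zs = degree f"
    using roots_list[OF assms(1)] by blast
  then show ?thesis using step[OF assms] by blast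
qed

lemma RS_one: "RS 1"
  by (simp add: RS_def real_zeros_def)

lemma hermite_props: "RS (hermite m) \<and> lead_coeff (hermite m) = 2 ^ m \<and> degree (hermite m) = m"
proof (induction m)
  case 0 then show ?case by (simp add: RS_one)
next
  case (Suc m)
  have h0: "hermite m \<noteq> 0" using Suc by (simp add: RS_def)
  then show ?case using step_simple[of "hermite m" 0] Suc Sa_degree[OF h0, of 0]
    by (auto simp: hermite_Suc')
qed

lemma hermite_lists:
  assumes "n \<ge> 1"
  shows "\<exists>zs ws. sorted_wrt (<) zs \<and> set zs = real_zeros (hermite (n - 1)) \<and> length zs = n - 1 \<and>
     sorted_wrt (<) ws \<and> set ws = real_zeros (hermite n) \<and> length ws = n \<and>
     (\<forall>i<n-1. ws!i < zs!i \<and> zs!i < ws!Suc i)"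
proof -
  have hp: "RS (hermite (n-1))" "lead_coeff (hermite (n-1)) > 0" "degree (hermite (n-1)) = n - 1"
    using hermite_props[of "n-1"] by auto
  obtain zs where zs: "sorted_wrt (<) zs" "set zs = real_zeros (hermite (n-1))" "length zs = n - 1"
    using roots_list[OF hp(1)] hp(3) by auto
  have "hermite n = Sa 0 (hermite (n-1))" using assms hermite_Suc'[of "n-1"] by simp
  then show ?thesis using step[OF hp(1) hp(2) zs(1) zs(2)] zs hp(3) assms by auto
qed

fun al :: "nat \<Rightarrow> nat \<Rightarrow> real \<Rightarrow> real" where
  "al n 0 x = 1"
| "al n (Suc 0) x = 0"
| "al n (Suc (Suc j)) x = (2 * x * al n (Suc j) x - al n j x) / (2 * real (n - Suc j))"

fun be :: "nat \<Rightarrow> nat \<Rightarrow> real \<Rightarrow> real" where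
  "be n 0 x = 0"
| "be n (Suc 0) x = 1"
| "be n (Suc (Suc j)) x = (2 * x * be n (Suc j) x - be n j x) / (2 * real (n - Suc j))"

lemma back_aux1:
  fixes A B C x :: real
  assumes "A = 2 * x * B - 2 * m * C" "m \<noteq> 0"
  shows "C = (2 * x * B - A) / (2 * m)"
  using assms by (simp add: field_simps)

lemma back_aux2:
  fixes a0 a1 b0 b1 h g c x :: real
  assumes "c \<noteq> 0"
  shows "(2*x*(a1*h+b1*g) - (a0*h+b0*g))/c = ((2*x*a1 - a0)/c)*h + ((2*x*b1-b0)/c)*g"
  using assms by (simp add: field_simps)

lemma hermite_back:
  assumes "n \<ge> 1"
  shows "j \<le> n \<Longrightarrow> poly (hermite (n - j)) x = al n j x * poly (hermite n) x + be n j x * poly (hermite (n - 1)) x"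
proof (induction j rule: nat_less_induct)
  case (1 j)
  show ?case
  proof (cases j)
    case 0 then show ?thesis by (simp del: hermite.simps)
  next
    case (Suc i)
    show ?thesis
    proof (cases i)
      case 0 then show ?thesis using Suc by simp
    next
      case (Suc l)
      have j: "j = Suc (Suc l)" using Suc \<open>j = Suc i\<close> by simp
      define m where "m = n - Suc l"
      have m1: "m \<ge> 1" using 1(2) j m_def by simp
      have IH0: "poly (hermite (n - l)) x = al n l x * poly (hermite n) x + be n l x * poly (hermite (n - 1)) x"
        using 1(1)[rule_format, of l] 1(2) j by simp
      have IH1: "poly (hermite (n - Suc l)) x = al n (Suc l) x * poly (hermite n) x + be n (Suc l) x * poly (hermite (n - 1)) x"
        using 1(1)[rule_format, of "Suc l"] 1(2) j by simp
      obtain p where p: "m = Suc p" using m1 by (cases m) auto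
      have e1: "n - l = Suc (Suc p)" "n - j = p" using p m_def j 1(2) by auto
      have rec: "poly (hermite (n - l)) x = 2 * x * poly (hermite m) x - 2 * real m * poly (hermite (n - j)) x"
        unfolding e1 p by (rule poly_hermite_rec)
      have rec': "poly (hermite (n - j)) x = (2 * x * poly (hermite m) x - poly (hermite (n - l)) x) / (2 * real m)"
        using rec m1 by (intro back_aux1) auto
      have "2 * real m \<noteq> 0" using m1 by simp
      note b2 = back_aux2[OF this, of x "al n (Suc l) x" "poly (hermite n) x" "be n (Suc l) x" "poly (hermite (n - 1)) x" "al n l x" "be n l x"]
      have "poly (hermite (n - j)) x = (2*x*(al n (Suc l) x * poly (hermite n) x + be n (Suc l) x * poly (hermite (n - 1)) x) - (al n l x * poly (hermite n) x + be n l x * poly (hermite (n - 1)) x))/(2 * real m)"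
        using rec' IH0 IH1 m_def by simp
      also have "\<dots> = ((2*x*al n (Suc l) x - al n l x)/(2 * real m)) * poly (hermite n) x + ((2*x*be n (Suc l) x - be n l x)/(2 * real m)) * poly (hermite (n - 1)) x"
        by (rule b2)
      also have "\<dots> = al n j x * poly (hermite n) x + be n j x * poly (hermite (n - 1)) x"
        using j m_def by simp
      finally show ?thesis .
    qed
  qed
qed

lemma al_bound:
  assumes x: "\<bar>x\<bar> \<le> real n" and n1: "n \<ge> 1"
  shows "1 \<le> j \<Longrightarrow> 2 * j \<le> n \<Longrightarrow> \<bar>al n j x\<bar> \<le> 3 ^ j / real n"
proof (induction j rule: nat_less_induct)
  case (1 j)
  have npos: "real n > 0" using n1 by simp
  show ?case
  proof (cases j)
    case 0 then show ?thesis using 1 by simp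
  next
    case (Suc i)
    show ?thesis
    proof (cases i)
      case 0 then show ?thesis using Suc npos by simp
    next
      case (Suc l)
      have j: "j = Suc (Suc l)" using Suc \<open>j = Suc i\<close> by simp
      define D where "D = 2 * real (n - Suc l)"
      have Dn: "D \<ge> real n" using 1(3) j unfolding D_def by (simp add: of_nat_diff)
      have Dpos: "D > 0" using Dn npos by simp
      define num where "num = 2 * x * al n (Suc l) x - al n l x"
      have alj: "al n j x = num / D" by (simp add: j num_def D_def)
      have numb: "\<bar>num\<bar> \<le> 3 ^ Suc (Suc l)"
      proof (cases l)
        case 0 then show ?thesis by (simp add: num_def)
      next
        case (Suc l')
        have a1: "\<bar>al n (Suc l) x\<bar> \<le> 3 ^ Suc l / real n"
          using 1(1)[rule_format, of "Suc l"] j 1(3) by simp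
        have a0: "\<bar>al n l x\<bar> \<le> 3 ^ l / real n"
          using 1(1)[rule_format, of l] j 1(3) Suc by (simp only:) simp
        have "\<bar>num\<bar> \<le> 2 * \<bar>x\<bar> * \<bar>al n (Suc l) x\<bar> + \<bar>al n l x\<bar>"
        proof -
          have "\<bar>2 * x * al n (Suc l) x\<bar> = 2 * \<bar>x\<bar> * \<bar>al n (Suc l) x\<bar>" by (simp add: abs_mult)
          then show ?thesis unfolding num_def by linarith
        qed
        also have "\<dots> \<le> 2 * real n * (3 ^ Suc l / real n) + 3 ^ l / real n"
          using a1 a0 x by (intro add_mono mult_mono) auto
        also have "\<dots> = 2 * 3 ^ Suc l + 3 ^ l / real n" using npos by simp
        also have "2 * 3 ^ Suc l + 3 ^ l / real n \<le> (3::real) ^ Suc (Suc l)"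
        proof -
          have "3 ^ l / real n \<le> (3::real) ^ l" using n1 by (simp add: divide_le_eq)
          moreover have "(3::real) ^ l \<le> 3 ^ Suc l" by simp
          ultimately show ?thesis by (simp only: power_Suc)
        qed
        finally show ?thesis .
      qed
      have "\<bar>al n j x\<bar> = \<bar>num\<bar> / D" using alj Dpos by simp
      also have "\<dots> \<le> \<bar>num\<bar> / real n" using Dn npos by (intro divide_left_mono) auto
      also have "\<dots> \<le> 3 ^ j / real n" using numb j npos by (intro divide_right_mono) auto
      finally show ?thesis .
    qed
  qed
qed

lemma opS_hermite_poly:
  "poly (opS Q (hermite m)) x = (\<Sum>i\<le>degree Q. coeff Q i * poly (hermite (m + i)) x)"
proof -
  have "\<And>i. (Sa 0 ^^ i) (hermite m) = hermite (m + i)"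
    by (simp add: hermite_funpow funpow_add[symmetric, THEN fun_cong, simplified] add.commute)
  then show ?thesis unfolding opS_def by (simp add: poly_sum)
qed

lemma root_abs_bound:
  assumes "poly (hermite (n - 1)) \<xi> = 0" "n \<ge> 1"
  shows "\<bar>\<xi>\<bar> \<le> real n"
proof -
  have "\<xi>^2 < 2 * real (n - 1)" using hermite_root_bound[OF assms(1)] .
  also have "2 * real (n - 1) \<le> (real n)^2"
  proof -
    have e: "2 * real (n-1) = 2 * real n - 2" using assms(2) by (simp add: of_nat_diff)
    have "(real n)^2 - (2 * real n - 2) = (real n - 1)^2 + 1" by (simp add: power2_eq_square algebra_simps)
    moreover have "(real n - 1)^2 \<ge> 0" by simp
    ultimately show ?thesis using e by linarith
  qed
  finally have "\<bar>\<xi>\<bar>^2 < (real n)^2" by simp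
  then show ?thesis using power_less_imp_less_base[of "\<bar>\<xi>\<bar>" 2 "real n"] by simp
qed

lemma core:
  fixes Q :: "real poly"
  assumes lcQ: "lead_coeff Q = 1"
  shows "\<exists>m0. \<forall>m\<ge>m0. RS (opS Q (hermite m))"
proof -
  define k where "k = degree Q"
  define C where "C = (\<Sum>i<k. \<bar>coeff Q i\<bar>)"
  have C0: "C \<ge> 0" unfolding C_def by (rule sum_nonneg) auto
  define m0 where "m0 = 2 * k + 2 + nat \<lceil>C * 3 ^ k\<rceil>"
  have "\<forall>m\<ge>m0. RS (opS Q (hermite m))"
  proof (intro allI impI)
    fix m assume mm: "m \<ge> m0"
    define n where "n = m + k"
    have n2k: "2 * k + 2 \<le> n" using mm by (simp add: m0_def n_def)
    have n1: "n \<ge> 1" using n2k by simp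
    have nC: "C * 3 ^ k < real n"
    proof -
      have "C * 3 ^ k \<le> real (nat \<lceil>C * 3 ^ k\<rceil>)" by linarith
      also have "\<dots> < real n" using mm by (simp add: m0_def n_def)
      finally show ?thesis .
    qed
    have npos: "real n > 0" using n1 by simp
    define T where "T = opS Q (hermite m)"
    have Q0: "Q \<noteq> 0" using lcQ by auto
    have hm: "hermite m \<noteq> 0" "degree (hermite m) = m" "lead_coeff (hermite m) = 2 ^ m"
      using hermite_props[of m] by (auto simp: RS_def)
    have Tprops: "T \<noteq> 0" "degree T = n" "lead_coeff T = 2 ^ k * 2 ^ m"
      using opS_degree[OF hm(1) Q0] hm lcQ unfolding T_def n_def k_def by auto
    have lT: "lead_coeff T > 0" using Tprops(3) by simp
    obtain zs ws where zs: "sorted_wrt (<) zs" "set zs = real_zeros (hermite (n - 1))" "length zs = n - 1"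
      and ws: "sorted_wrt (<) ws" "set ws = real_zeros (hermite n)" "length ws = n"
      and il: "\<forall>i<n-1. ws!i < zs!i \<and> zs!i < ws!Suc i"
      using hermite_lists[OF n1] by blast
    have hn: "RS (hermite n)" "lead_coeff (hermite n) > 0" using hermite_props[of n] by auto
    obtain M1 where M1: "\<forall>x\<ge>M1. poly T x > 0" using poly_pos_pinf[OF lT] by blast
    obtain M0 where M0: "\<forall>x\<le>M0. (-1)^n * poly T x > 0" using poly_pos_minf[OF lT] Tprops(2) by metis
    define B where "B = (\<Sum>z\<in>set zs. \<bar>z\<bar>)"
    have zB: "\<And>z. z \<in> set zs \<Longrightarrow> \<bar>z\<bar> \<le> B"
      unfolding B_def by (rule member_le_sum) auto
    have B0: "B \<ge> 0" unfolding B_def by (rule sum_nonneg) auto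
    define y0 where "y0 = - (\<bar>M0\<bar> + B + 1)"
    define y1 where "y1 = \<bar>M1\<bar> + B + 1"
    define ys where "ys = y0 # zs @ [y1]"
    have lys: "length ys = Suc (degree T)" using Tprops(2) zs(3) n1 by (simp add: ys_def)
    have sys: "sorted_wrt (<) ys"
      unfolding ys_def using zs(1)
      by (auto simp: sorted_wrt_append y0_def y1_def) (smt (verit) zB B0)+
    have sg: "\<forall>i\<le>degree T. (-1)^(degree T - i) * poly T (ys!i) > 0"
    proof (intro allI impI)
      fix i assume i: "i \<le> degree T"
      show "(-1)^(degree T - i) * poly T (ys!i) > 0"
      proof (cases i)
        case 0
        have "y0 \<le> M0" using B0 by (simp add: y0_def)
        then show ?thesis using M0 0 Tprops(2) by (simp add: ys_def)
      next
        case (Suc j)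
        show ?thesis
        proof (cases "j < n - 1")
          case True
          define \<xi> where "\<xi> = zs!j"
          have ysi: "ys!i = \<xi>" using Suc True zs(3) by (simp add: ys_def nth_append \<xi>_def)
          have root: "poly (hermite (n - 1)) \<xi> = 0"
            using zs(2) zs(3) True unfolding \<xi>_def real_zeros_def by (metis mem_Collect_eq nth_mem)
          have xb: "\<bar>\<xi>\<bar> \<le> real n" by (rule root_abs_bound[OF root n1])
          define A where "A = (\<Sum>i\<le>k. coeff Q i * al n (k - i) \<xi>)"
          have TA: "poly T \<xi> = A * poly (hermite n) \<xi>"
          proof -
            have "poly T \<xi> = (\<Sum>i\<le>k. coeff Q i * poly (hermite (m + i)) \<xi>)"
              unfolding T_def k_def by (rule opS_hermite_poly)
            also have "\<dots> = (\<Sum>i\<le>k. coeff Q i * al n (k - i) \<xi> * poly (hermite n) \<xi>)"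
            proof (intro sum.cong refl)
              fix i assume "i \<in> {..k}"
              then have ik: "i \<le> k" by simp
              have "m + i = n - (k - i)" using ik n_def by simp
              then have "poly (hermite (m + i)) \<xi> = al n (k - i) \<xi> * poly (hermite n) \<xi> + be n (k - i) \<xi> * poly (hermite (n - 1)) \<xi>"
                using hermite_back[OF n1, of "k - i" \<xi>] ik n_def by simp
              then show "coeff Q i * poly (hermite (m + i)) \<xi> = coeff Q i * al n (k - i) \<xi> * poly (hermite n) \<xi>"
                using root by simp
            qed
            also have "\<dots> = A * poly (hermite n) \<xi>" unfolding A_def by (simp add: sum_distrib_right)
            finally show ?thesis .
          qed
          have Apos: "A > 0"
          proof -
            define R where "R = (\<Sum>i<k. coeff Q i * al n (k - i) \<xi>)"
            have AR: "A = R + 1"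
            proof -
              have "A = (\<Sum>i<Suc k. coeff Q i * al n (k - i) \<xi>)" unfolding A_def
                by (simp add: lessThan_Suc_atMost)
              also have "\<dots> = R + coeff Q k * al n 0 \<xi>" unfolding R_def by simp
              finally show ?thesis using lcQ k_def by simp
            qed
            have "\<bar>R\<bar> \<le> (\<Sum>i<k. \<bar>coeff Q i * al n (k - i) \<xi>\<bar>)" unfolding R_def by (rule sum_abs)
            also have "\<dots> \<le> (\<Sum>i<k. \<bar>coeff Q i\<bar> * (3 ^ k / real n))"
            proof (intro sum_mono)
              fix i assume "i \<in> {..<k}"
              then have ik: "i < k" by simp
              have "\<bar>al n (k - i) \<xi>\<bar> \<le> 3 ^ (k - i) / real n"
                using al_bound[OF xb n1, of "k - i"] ik n2k by simp
              also have "\<dots> \<le> 3 ^ k / real n" using npos by (intro divide_right_mono power_increasing) auto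
              finally show "\<bar>coeff Q i * al n (k - i) \<xi>\<bar> \<le> \<bar>coeff Q i\<bar> * (3 ^ k / real n)"
                by (simp add: abs_mult) (metis abs_ge_zero mult_left_mono times_divide_eq_right)
            qed
            also have "\<dots> = C * 3 ^ k / real n" unfolding C_def by (simp add: sum_distrib_right sum_divide_distrib)
            also have "\<dots> < 1" using nC npos by simp
            finally show ?thesis using AR by linarith
          qed
          have Suc_le: "Suc j \<le> length ws" using True ws(3) by simp
          have lo: "\<forall>l<Suc j. ws!l \<le> \<xi>"
          proof (intro allI impI)
            fix l assume "l < Suc j"
            then have "ws!l \<le> ws!j" using True ws(3) by (intro sorted_le_nth[OF ws(1)]) auto
            also have "ws!j < \<xi>" using il True \<xi>_def by auto
            finally show "ws!l \<le> \<xi>" by simp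
          qed
          have hi: "\<forall>l. Suc j \<le> l \<and> l < length ws \<longrightarrow> \<xi> < ws!l"
          proof (intro allI impI)
            fix l assume "Suc j \<le> l \<and> l < length ws"
            then have "ws!Suc j \<le> ws!l" by (intro sorted_le_nth[OF ws(1)]) auto
            moreover have "\<xi> < ws!Suc j" using il True \<xi>_def by auto
            ultimately show "\<xi> < ws!l" by simp
          qed
          have cnt: "card {z\<in>real_zeros (hermite n). \<xi> < z} = n - Suc j"
            using card_greater_sorted[OF ws(1) Suc_le lo hi] ws(2) ws(3) by simp
          have nz: "poly (hermite n) \<xi> \<noteq> 0"
          proof
            assume "poly (hermite n) \<xi> = 0"
            then have "\<xi> \<in> set ws" using ws(2) by (simp add: real_zeros_def)
            then obtain l where l: "l < length ws" "\<xi> = ws!l" by (auto simp: in_set_conv_nth)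
            show False
            proof (cases "l < Suc j")
              case True then show False using lo l il \<open>j < n - 1\<close> \<xi>_def
                by (metis less_Suc_eq_le not_less sorted_le_nth[OF ws(1)] less_imp_le_nat order.strict_trans1
                      ws(3) Suc_le le_less_trans)
            next
              case False then show False using hi[rule_format, of l] l by simp
            qed
          qed
          have sH: "(-1)^(n - Suc j) * poly (hermite n) \<xi> > 0"
            using RS_sign[OF hn nz] cnt by simp
          have "degree T - i = n - Suc j" using Tprops(2) Suc by simp
          then show ?thesis using ysi TA Apos sH
            by (simp add: mult.left_commute)
        next
          case False
          then have "j = n - 1" using i Suc Tprops(2) by simp
          then have "ys!i = y1" using Suc zs(3) by (simp add: ys_def nth_append)
          moreover have "y1 \<ge> M1" using B0 by (simp add: y1_def)
          moreover have "degree T - i = 0" using Suc \<open>j = n - 1\<close> Tprops(2) n1 by simp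
          ultimately show ?thesis using M1 by simp
        qed
      qed
    qed
    show "RS (opS Q (hermite m))" using alternation[OF Tprops(1) lys sys sg] T_def by blast
  qed
  then show ?thesis by blast
qed

abbreviation mofr :: "real poly \<Rightarrow> complex poly" where
  "mofr p \<equiv> map_poly complex_of_real p"

lemma mofr_mult: "mofr (p * q) = mofr p * mofr q"
  by (rule poly_eqI) (simp add: coeff_map_poly coeff_mult)

lemma mofr_prod: "mofr (\<Prod>z\<in>Z. f z) = (\<Prod>z\<in>Z. mofr (f z))"
  by (induction Z rule: infinite_finite_induct) (auto simp: mofr_mult)

lemma mofr_linear: "mofr [:-r, 1:] = [:-complex_of_real r, 1:]"
  by (simp add: map_poly_pCons)

lemma mofr_smult: "mofr (smult c p) = smult (complex_of_real c) (mofr p)"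
  by (rule map_poly_smult) auto

lemma poly_mofr: "poly (mofr p) (complex_of_real x) = complex_of_real (poly p x)"
  by (induction p) (auto simp: map_poly_pCons)

lemma mofr_degree: "degree (mofr p) = degree p"
  by (rule degree_map_poly) auto

lemma mofr_lc: "lead_coeff (mofr p) = complex_of_real (lead_coeff p)"
  by (simp add: mofr_degree coeff_map_poly)

lemma mofr_inj: "mofr p = mofr q \<Longrightarrow> p = q"
  by (rule poly_eqI) (metis coeff_map_poly of_real_0 of_real_eq_iff)

lemma order_prod_linear:
  fixes Z :: "complex set"
  assumes "finite Z"
  shows "order w (\<Prod>z\<in>Z. [:-z,1:]) = (if w \<in> Z then 1 else 0)"
  using assms
proof (induction Z rule: finite_induct)
  case empty then show ?case by simp
next
  case (insert a Z)
  have nz: "(\<Prod>z\<in>Z. [:-z,1:]) \<noteq> (0 :: complex poly)" using insert.hyps by (subst prod_zero_iff) auto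
  have "order w (\<Prod>z\<in>insert a Z. [:-z,1:]) = order w ([:-a,1:] * (\<Prod>z\<in>Z. [:-z,1:]))"
    by (simp only: prod.insert[OF insert.hyps])
  also have "\<dots> = order w [:-a,1:] + order w (\<Prod>z\<in>Z. [:-z,1:])"
  proof (rule order_mult)
    show "[:-a,1:] * (\<Prod>z\<in>Z. [:-z,1:]) \<noteq> 0" using nz by (metis mult_eq_0_iff pCons_eq_0_iff zero_neq_one)
  qed
  also have "order w [:-a,1:] = (if w = a then 1 else 0)"
  proof (cases "w = a")
    case True then show ?thesis using order_power_n_n[of a 1] by simp
  next
    case False then show ?thesis using order_0I[of "[:-a,1:]" w] by simp
  qed
  finally show ?case using insert by auto
qed

lemma RS_real_simple:
  assumes "RS p"
  shows "real_simple_zeros p"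
proof -
  define Z where "Z = real_zeros p"
  have p0: "p \<noteq> 0" using assms by (simp add: RS_def)
  have fin: "finite Z" using p0 by (simp add: Z_def finite_real_zeros)
  have c0: "lead_coeff p \<noteq> 0" using p0 by simp
  have "mofr p = mofr (smult (lead_coeff p) (\<Prod>z\<in>Z. [:-z,1:]))"
    using RS_prod[OF assms] Z_def by simp
  also have "\<dots> = smult (complex_of_real (lead_coeff p)) (\<Prod>z\<in>Z. [:-complex_of_real z,1:])"
    by (simp add: mofr_smult mofr_prod mofr_linear)
  also have "(\<Prod>z\<in>Z. [:-complex_of_real z,1:]) = (\<Prod>w\<in>complex_of_real ` Z. [:-w,1:])"
    by (subst prod.reindex) (auto simp: inj_on_def)
  finally have pc: "mofr p = smult (complex_of_real (lead_coeff p)) (\<Prod>w\<in>complex_of_real ` Z. [:-w,1:])" .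
  have fin2: "finite (complex_of_real ` Z)" using fin by simp
  show ?thesis unfolding real_simple_zeros_def
  proof (intro conjI allI impI)
    show "p \<noteq> 0" by (rule p0)
    fix w assume "poly (mofr p) w = 0"
    then have "(\<Prod>z\<in>complex_of_real ` Z. (w - z)) = 0" using pc c0 by (simp add: poly_prod)
    then have wZ: "w \<in> complex_of_real ` Z" using fin2 by (simp add: prod_zero_iff)
    then show "w \<in> \<real>" by (auto simp: Reals_def)
    have "order w (mofr p) = order w (\<Prod>w\<in>complex_of_real ` Z. [:-w,1:])"
      using pc c0 by (simp add: order_smult)
    also have "\<dots> = 1" using order_prod_linear[OF fin2] wZ by simp
    finally show "order w (mofr p) = 1" .
  qed
qed

lemma factor_real:
  fixes P :: "real poly"
  assumes "P \<noteq> 0"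
  shows "\<exists>rs Q. P = (\<Prod>r\<leftarrow>rs. [:-r,1:]) * Q \<and> (\<forall>x. poly Q x \<noteq> 0) \<and>
           lead_coeff Q = lead_coeff P \<and> degree Q \<le> degree P"
  using assms
proof (induction "degree P" arbitrary: P rule: less_induct)
  case less
  show ?case
  proof (cases "\<exists>x. poly P x = 0")
    case False
    then have "P = (\<Prod>r\<leftarrow>[]. [:-r,1:]) * P \<and> (\<forall>x. poly P x \<noteq> 0)" by simp
    then show ?thesis by blast
  next
    case True
    then obtain r where r: "poly P r = 0" by blast
    then have "[:-r,1:] dvd P" by (simp add: poly_eq_0_iff_dvd)
    then obtain P' where P': "P = [:-r,1:] * P'" by (elim dvdE)
    have P'0: "P' \<noteq> 0" using P' less.prems by auto
    have "degree ([:-r,1:] * P') = degree [:-r,1:] + degree P'" using P'0 by (intro degree_mult_eq) auto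
    then have dP: "degree P = Suc (degree P')" using P' by simp
    obtain rs Q where IH: "P' = (\<Prod>r\<leftarrow>rs. [:-r,1:]) * Q" "\<forall>x. poly Q x \<noteq> 0"
        "lead_coeff Q = lead_coeff P'" "degree Q \<le> degree P'"
      using less.hyps[of P'] dP P'0 by auto
    have "P = [:-r,1:] * ((\<Prod>r\<leftarrow>rs. [:-r,1:]) * Q)" using P' IH(1) by simp
    then have "P = (\<Prod>r\<leftarrow>r#rs. [:-r,1:]) * Q" by (simp only: list.map prod_list.Cons mult.assoc)
    moreover have "lead_coeff P = lead_coeff P'"
    proof -
      have "lead_coeff ([:-r,1:] * P') = lead_coeff [:-r,1:] * lead_coeff P'" by (rule lead_coeff_mult)
      then show ?thesis using P' by simp
    qed
    ultimately show ?thesis using IH dP by (metis le_SucI)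
  qed
qed

lemma opS_prodlist:
  assumes "RS h" "lead_coeff h > 0"
  shows "RS (opS (\<Prod>r\<leftarrow>rs. [:-r,1:]) h) \<and> lead_coeff (opS (\<Prod>r\<leftarrow>rs. [:-r,1:]) h) > 0"
proof (induction rs)
  case Nil then show ?case using assms by simp
next
  case (Cons r rs)
  have e: "(\<Prod>r\<leftarrow>r#rs. [:-r,1:]) = [:-r,1:] * (\<Prod>r\<leftarrow>rs. [:-r,1:])"
    by (simp only: list.map prod_list.Cons)
  have "opS (\<Prod>r\<leftarrow>r#rs. [:-r,1:]) h = Sa r (opS (\<Prod>r\<leftarrow>rs. [:-r,1:]) h)"
    by (simp only: e opS_mult opS_linear)
  moreover have "RS (Sa r (opS (\<Prod>r\<leftarrow>rs. [:-r,1:]) h)) \<and> lead_coeff (Sa r (opS (\<Prod>r\<leftarrow>rs. [:-r,1:]) h)) > 0"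
    using step_simple[of "opS (\<Prod>r\<leftarrow>rs. [:-r,1:]) h" r] Cons.IH by blast
  ultimately show ?case by simp
qed

lemma mofr_prodlist_nz:
  assumes "z \<notin> \<real>"
  shows "poly (mofr (\<Prod>r\<leftarrow>rs. [:-r,1:])) z \<noteq> 0"
proof (induction rs)
  case Nil then show ?case by simp
next
  case (Cons r rs)
  have "z - complex_of_real r \<noteq> 0" using assms by auto
  moreover have e: "(\<Prod>r\<leftarrow>r#rs. [:-r,1:]) = [:-r,1:] * (\<Prod>r\<leftarrow>rs. [:-r,1:])"
    by (simp only: list.map prod_list.Cons)
  ultimately show ?case using Cons by (simp only: e mofr_mult mofr_linear poly_mult) simp
qed

lemma nonreal_zeros_factor:
  assumes "P = (\<Prod>r\<leftarrow>rs. [:-r,1:]) * Q"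
  shows "nonreal_zeros P = nonreal_zeros Q"
  using mofr_prodlist_nz[of _ rs] unfolding nonreal_zeros_def assms by (auto simp: mofr_mult)

lemma main_from_core:
  fixes K :: nat and \<gamma> :: "nat \<Rightarrow> real" and rs :: "real list" and Q :: "real poly"
  assumes K: "K > 0" and g0: "\<gamma> 0 = 1"
    and fac: "Ppoly K \<gamma> = (\<Prod>r\<leftarrow>rs. [:-r,1:]) * Q" and lQ: "lead_coeff Q = 1"
    and core: "\<forall>m\<ge>m1. RS (opS Q (hermite m))"
    and n: "n \<ge> K + m1"
  shows "real_simple_zeros (qpoly K \<gamma> n) \<and>
         interlaces (real_zeros (qpoly K \<gamma> (Suc n))) (real_zeros (qpoly K \<gamma> n))"
proof -
  define P where "P = Ppoly K \<gamma>"
  have Pd: "degree P = K" "lead_coeff P = 1" "P \<noteq> 0" using Ppoly_degree[of \<gamma> K, OF g0] P_def by auto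
  have Q0: "Q \<noteq> 0" using lQ by auto
  have hm: "hermite (n - K) \<noteq> 0" "degree (hermite (n - K)) = n - K" "lead_coeff (hermite (n - K)) = 2 ^ (n - K)"
    using hermite_props[of "n - K"] by (auto simp: RS_def)
  define h where "h = opS Q (hermite (n - K))"
  have rh: "RS h" using core n h_def by auto
  have "lead_coeff h = lead_coeff Q * 2 ^ degree Q * lead_coeff (hermite (n - K))"
    using opS_degree[OF hm(1) Q0] h_def by blast
  then have "lead_coeff h = 2 ^ degree Q * 2 ^ (n - K)" using lQ hm(3) by simp
  then have lh: "lead_coeff h > 0" by simp
  have qn: "qpoly K \<gamma> n = opS (\<Prod>r\<leftarrow>rs. [:-r,1:]) h"
    using qpoly_opS[of K n \<gamma>] n fac h_def by (simp add: opS_mult)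
  have rq: "RS (qpoly K \<gamma> n)" "lead_coeff (qpoly K \<gamma> n) > 0"
    using opS_prodlist[OF rh lh, of rs] qn by auto
  have dq: "degree (qpoly K \<gamma> n) = n"
    using opS_degree[OF hm(1) Pd(3)] hm Pd qpoly_opS[of K n \<gamma>] n P_def by simp
  have qS: "qpoly K \<gamma> (Suc n) = Sa 0 (qpoly K \<gamma> n)"
  proof -
    have "qpoly K \<gamma> (Suc n) = opS P (hermite (Suc (n - K)))"
      using qpoly_opS[of K "Suc n" \<gamma>] n P_def by (simp add: Suc_diff_le)
    also have "\<dots> = opS P (Sa 0 (hermite (n - K)))" by (simp add: hermite_Suc')
    also have "\<dots> = Sa 0 (opS P (hermite (n - K)))" by (simp add: Sa_opS)
    also have "\<dots> = Sa 0 (qpoly K \<gamma> n)" using qpoly_opS[of K n \<gamma>] n P_def by simp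
    finally show ?thesis .
  qed
  obtain zs where zs: "sorted_wrt (<) zs" "set zs = real_zeros (qpoly K \<gamma> n)" "length zs = degree (qpoly K \<gamma> n)"
    using roots_list[OF rq(1)] by blast
  obtain ws where ws: "sorted_wrt (<) ws" "set ws = real_zeros (Sa 0 (qpoly K \<gamma> n))"
      "length ws = Suc (degree (qpoly K \<gamma> n))"
      "\<forall>i<degree (qpoly K \<gamma> n). ws!i < zs!i \<and> zs!i < ws!Suc i"
    using step[OF rq(1) rq(2) zs, of 0] by blast
  have "zs \<noteq> []" using zs(3) dq n K by auto
  then have "interlaces (set ws) (set zs)"
    using interlaces_lists[OF ws(1) zs(1)] ws(3) ws(4) zs(3) by simp
  then show ?thesis using RS_real_simple[OF rq(1)] ws(2) zs(2) qS by simp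
qed

definition FQ :: "nat \<Rightarrow> complex set \<Rightarrow> real poly set" where
  "FQ K S = {Q. lead_coeff Q = 1 \<and> degree Q \<le> K \<and> (\<forall>x. poly Q x \<noteq> 0) \<and> nonreal_zeros Q = S}"

definition m0f :: "real poly \<Rightarrow> nat" where
  "m0f Q = (SOME m0. \<forall>m\<ge>m0. RS (opS Q (hermite m)))"

definition Nf :: "nat \<Rightarrow> complex set \<Rightarrow> nat" where
  "Nf K S = K + Max (insert 0 (m0f ` FQ K S)) + 1"

lemma m0f_prop: "lead_coeff Q = 1 \<Longrightarrow> \<forall>m\<ge>m0f Q. RS (opS Q (hermite m))"
  unfolding m0f_def using core by (rule someI_ex)

lemma roots_FQ:
  assumes "Q \<in> FQ K S"
  shows "{z. poly (mofr Q) z = 0} = S"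
proof
  show "{z. poly (mofr Q) z = 0} \<subseteq> S"
  proof
    fix z assume z: "z \<in> {z. poly (mofr Q) z = 0}"
    have "z \<notin> \<real>"
    proof
      assume "z \<in> \<real>"
      then obtain x where "z = complex_of_real x" by (auto elim: Reals_cases)
      then show False using z assms by (simp add: poly_mofr FQ_def)
    qed
    then show "z \<in> S" using z assms by (auto simp: FQ_def nonreal_zeros_def)
  qed
  show "S \<subseteq> {z. poly (mofr Q) z = 0}" using assms by (auto simp: FQ_def nonreal_zeros_def)
qed

lemma FQ_finite:
  assumes "finite S"
  shows "finite (FQ K S)"
proof -
  define \<phi> where "\<phi> Q = (\<lambda>s\<in>S. order s (mofr Q))" for Q
  have img: "\<phi> ` FQ K S \<subseteq> (\<Pi>\<^sub>E s\<in>S. {..K})"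
  proof
    fix f assume "f \<in> \<phi> ` FQ K S"
    then obtain Q where Q: "Q \<in> FQ K S" "f = \<phi> Q" by blast
    have "lead_coeff (mofr Q) = 1" using Q by (simp add: FQ_def mofr_lc)
    then have "mofr Q \<noteq> 0" by auto
    then have "\<forall>s. order s (mofr Q) \<le> K" using Q order_degree[of "mofr Q"] mofr_degree[of Q]
      by (auto simp: FQ_def) (meson le_trans)
    then show "f \<in> (\<Pi>\<^sub>E s\<in>S. {..K})" using Q by (auto simp: \<phi>_def)
  qed
  have inj: "inj_on \<phi> (FQ K S)"
  proof (rule inj_onI)
    fix Q1 Q2 assume Q1: "Q1 \<in> FQ K S" and Q2: "Q2 \<in> FQ K S" and e: "\<phi> Q1 = \<phi> Q2"
    have ord: "\<forall>s\<in>S. order s (mofr Q1) = order s (mofr Q2)"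
      using e unfolding \<phi>_def by (metis restrict_apply')
    have dec: "mofr Q = (\<Prod>z\<in>S. [:-z,1:] ^ order z (mofr Q))" if "Q \<in> FQ K S" for Q
    proof -
      have "lead_coeff (mofr Q) = 1" using that by (simp add: FQ_def mofr_lc)
      then show ?thesis using complex_poly_decompose[of "mofr Q"] roots_FQ[OF that] by simp
    qed
    have "mofr Q1 = mofr Q2" using dec[OF Q1] dec[OF Q2] ord by (metis (no_types, lifting) prod.cong)
    then show "Q1 = Q2" by (rule mofr_inj)
  qed
  show ?thesis
    by (rule inj_on_finite[OF inj img]) (intro finite_PiE assms; simp)
qed

theorem theorem1p2:
  shows "(\<forall>(K::nat) (\<gamma>::nat \<Rightarrow> real). K > 0 \<and> \<gamma> 0 = 1 \<and> \<gamma> K \<noteq> 0 \<and>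
            nonreal_zeros (Ppoly K \<gamma>) = {} \<longrightarrow>
            (\<forall>n\<ge>K. real_simple_zeros (qpoly K \<gamma> n) \<and>
                    interlaces (real_zeros (qpoly K \<gamma> (Suc n))) (real_zeros (qpoly K \<gamma> n))))
       \<and> (\<exists>N :: nat \<Rightarrow> complex set \<Rightarrow> nat.
            \<forall>(K::nat) (\<gamma>::nat \<Rightarrow> real). K > 0 \<and> \<gamma> 0 = 1 \<and> \<gamma> K \<noteq> 0 \<and>
              nonreal_zeros (Ppoly K \<gamma>) \<noteq> {} \<longrightarrow>
              N K (nonreal_zeros (Ppoly K \<gamma>)) > 0 \<and>
              (\<forall>n. n \<ge> N K (nonreal_zeros (Ppoly K \<gamma>)) \<and> n \<ge> K \<longrightarrow>
                 real_simple_zeros (qpoly K \<gamma> n) \<and>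
                 interlaces (real_zeros (qpoly K \<gamma> (Suc n))) (real_zeros (qpoly K \<gamma> n))))"
proof (intro conjI)
  show "\<forall>(K::nat) (\<gamma>::nat \<Rightarrow> real). K > 0 \<and> \<gamma> 0 = 1 \<and> \<gamma> K \<noteq> 0 \<and>
            nonreal_zeros (Ppoly K \<gamma>) = {} \<longrightarrow>
            (\<forall>n\<ge>K. real_simple_zeros (qpoly K \<gamma> n) \<and>
                    interlaces (real_zeros (qpoly K \<gamma> (Suc n))) (real_zeros (qpoly K \<gamma> n)))"
  proof (intro allI impI)
    fix K :: nat and \<gamma> :: "nat \<Rightarrow> real" and n :: nat
    assume H: "K > 0 \<and> \<gamma> 0 = 1 \<and> \<gamma> K \<noteq> 0 \<and> nonreal_zeros (Ppoly K \<gamma>) = {}" and n: "n \<ge> K"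
    have Pd: "degree (Ppoly K \<gamma>) = K" "lead_coeff (Ppoly K \<gamma>) = 1" "Ppoly K \<gamma> \<noteq> 0"
      using Ppoly_degree[of \<gamma> K] H by auto
    obtain rs Q where fac: "Ppoly K \<gamma> = (\<Prod>r\<leftarrow>rs. [:-r,1:]) * Q" and nr: "\<forall>x. poly Q x \<noteq> 0"
        and lQ: "lead_coeff Q = 1"
      using factor_real[OF Pd(3)] Pd(2) by metis
    have nzQ: "nonreal_zeros Q = {}" using nonreal_zeros_factor[OF fac] H by simp
    have "\<forall>z. poly (mofr Q) z \<noteq> 0"
    proof
      fix z show "poly (mofr Q) z \<noteq> 0"
      proof (cases "z \<in> \<real>")
        case True
        then obtain x where "z = complex_of_real x" by (auto elim: Reals_cases)
        then show ?thesis using nr by (simp add: poly_mofr)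
      next
        case False
        then show ?thesis using nzQ by (auto simp: nonreal_zeros_def)
      qed
    qed
    then have "degree (mofr Q) = 0"
      using fundamental_theorem_of_algebra constant_degree by metis
    then have "degree Q = 0" by (simp add: mofr_degree)
    then have "Q = 1" using lQ by (metis degree_eq_zeroE lead_coeff_pCons(2) one_pCons)
    then have core1: "\<forall>m\<ge>0. RS (opS Q (hermite m))" using hermite_props by simp
    show "real_simple_zeros (qpoly K \<gamma> n) \<and>
          interlaces (real_zeros (qpoly K \<gamma> (Suc n))) (real_zeros (qpoly K \<gamma> n))"
      using main_from_core[OF _ _ fac lQ core1] H n by simp
  qed
  show "\<exists>N :: nat \<Rightarrow> complex set \<Rightarrow> nat.
            \<forall>(K::nat) (\<gamma>::nat \<Rightarrow> real). K > 0 \<and> \<gamma> 0 = 1 \<and> \<gamma> K \<noteq> 0 \<and>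
              nonreal_zeros (Ppoly K \<gamma>) \<noteq> {} \<longrightarrow>
              N K (nonreal_zeros (Ppoly K \<gamma>)) > 0 \<and>
              (\<forall>n. n \<ge> N K (nonreal_zeros (Ppoly K \<gamma>)) \<and> n \<ge> K \<longrightarrow>
                 real_simple_zeros (qpoly K \<gamma> n) \<and>
                 interlaces (real_zeros (qpoly K \<gamma> (Suc n))) (real_zeros (qpoly K \<gamma> n)))"
  proof (intro exI[of _ Nf] allI impI conjI)
    fix K :: nat and \<gamma> :: "nat \<Rightarrow> real"
    assume H: "K > 0 \<and> \<gamma> 0 = 1 \<and> \<gamma> K \<noteq> 0 \<and> nonreal_zeros (Ppoly K \<gamma>) \<noteq> {}"
    define S where "S = nonreal_zeros (Ppoly K \<gamma>)"
    show "Nf K (nonreal_zeros (Ppoly K \<gamma>)) > 0" by (simp add: Nf_def)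
    fix n assume n: "n \<ge> Nf K (nonreal_zeros (Ppoly K \<gamma>)) \<and> n \<ge> K"
    have Pd: "degree (Ppoly K \<gamma>) = K" "lead_coeff (Ppoly K \<gamma>) = 1" "Ppoly K \<gamma> \<noteq> 0"
      using Ppoly_degree[of \<gamma> K] H by auto
    obtain rs Q where fac: "Ppoly K \<gamma> = (\<Prod>r\<leftarrow>rs. [:-r,1:]) * Q" and nr: "\<forall>x. poly Q x \<noteq> 0"
        and lQ: "lead_coeff Q = 1" and dQ: "degree Q \<le> degree (Ppoly K \<gamma>)"
      using factor_real[OF Pd(3)] Pd(2) by metis
    have nzQ: "nonreal_zeros Q = S" using nonreal_zeros_factor[OF fac] S_def by simp
    have QF: "Q \<in> FQ K S" using lQ dQ Pd(1) nr nzQ by (simp add: FQ_def)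
    have finS: "finite S"
    proof -
      have "mofr (Ppoly K \<gamma>) \<noteq> 0" using Pd(2) by (metis mofr_lc of_real_1 leading_coeff_0_iff zero_neq_one)
      then have "finite {z. poly (mofr (Ppoly K \<gamma>)) z = 0}" by (rule poly_roots_finite)
      then show ?thesis unfolding S_def nonreal_zeros_def by (rule rev_finite_subset) auto
    qed
    have "m0f Q \<le> Max (insert 0 (m0f ` FQ K S))"
      using FQ_finite[OF finS] QF by (intro Max_ge) auto
    then have nb: "n \<ge> K + m0f Q" using n by (simp add: Nf_def S_def)
    have R: "real_simple_zeros (qpoly K \<gamma> n) \<and>
          interlaces (real_zeros (qpoly K \<gamma> (Suc n))) (real_zeros (qpoly K \<gamma> n))"
      using main_from_core[OF _ _ fac lQ m0f_prop[OF lQ] nb] H by simp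
    then show "real_simple_zeros (qpoly K \<gamma> n)" by simp
    from R show "interlaces (real_zeros (qpoly K \<gamma> (Suc n))) (real_zeros (qpoly K \<gamma> n))" by simp
  qed
qed

end
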